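(* Let $Q\in\mathbb{R}^{n\times n}$ be symmetric positive definite with $Q_{i,i}=1$ for all $i$, whose support graph is a connected tree, and let $c,\lambda\in\mathbb{R}^n$ with $\lambda_i>0$. Then for every node $u$ and every $\alpha\in\mathbb{R}$, $$f_u(\alpha)=\tfrac12 Q_{u,u}\alpha^2+c_u\alpha+\lambda_u\mathbb{1}_\alpha-\sum_{v\in\mathrm{par}(u)}f_v^*(-Q_{u,v}\alpha),$$ where $f_v^*(\beta)=\sup_{\xi\in\mathbb{R}}\{\beta\xi-f_v(\xi)\}$ (with the empty sum equal to $0$ when $u$ is a leaf).
   Context: The support graph of $Q$ is the undirected graph on $\{1,\dots,n\}$ with edge $\{i,j\}$ ($i\ne j$) iff $Q_{i,j}\ne0$. The tree is rooted at $n$ with topological labeling: each non-root node $u$ has a unique neighbor $\mathrm{child}(u)$ on its path to the root, with $u<\mathrm{child}(u)$; $\mathrm{par}(u)=\{v:\mathrm{child}(v)=u\}$. $\mathrm{supp}_u(Q)$ is the subtree of $u$ and all nodes whose path to the root passes through $u$; $n_u$ is its size; $Q_{[u]},c_{[u]},\lambda_{[u]}$ are the restrictions to its nodes. $\mathbb{1}_\alpha=0$ if $\alpha=0$ and $1$ otherwise. The parametric cost is $f_u(\alpha)=\min\{\tfrac12x^\top Q_{[u]}x+c_{[u]}^\top x+\lambda_{[u]}^\top z : x\in\mathbb{R}^{n_u}, z\in\{0,1\}^{n_u}, x_i(1-z_i)=0\ \forall i, x_u=\alpha\}$, where $x_u$ is the coordinate corresponding to node $u$. *)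

theory Defs
  imports Complex_Main
begin

text \<open>Nodes are labelled 1..n. Matrices and vectors are functions on nat, only
  their values on indices in 1..n matter.\<close>

definition nodes :: "nat \<Rightarrow> nat set" where
  "nodes n = {1..n}"

definition sadj :: "(nat \<Rightarrow> nat \<Rightarrow> real) \<Rightarrow> nat \<Rightarrow> nat \<Rightarrow> nat \<Rightarrow> bool" where
  "sadj Q n i j \<longleftrightarrow> i \<in> nodes n \<and> j \<in> nodes n \<and> i \<noteq> j \<and> Q i j \<noteq> 0"

definition sedges :: "(nat \<Rightarrow> nat \<Rightarrow> real) \<Rightarrow> nat \<Rightarrow> nat set set" where
  "sedges Q n = {{i, j} | i j. sadj Q n i j}"

definition reach_in :: "(nat \<Rightarrow> nat \<Rightarrow> real) \<Rightarrow> nat \<Rightarrow> nat set \<Rightarrow> nat \<Rightarrow> nat \<Rightarrow> bool" where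
  "reach_in Q n S a b \<longleftrightarrow> (\<lambda>x y. x \<in> S \<and> y \<in> S \<and> sadj Q n x y)\<^sup>*\<^sup>* a b"

definition connected_support :: "(nat \<Rightarrow> nat \<Rightarrow> real) \<Rightarrow> nat \<Rightarrow> bool" where
  "connected_support Q n \<longleftrightarrow> (\<forall>a\<in>nodes n. \<forall>b\<in>nodes n. reach_in Q n (nodes n) a b)"

definition support_is_tree :: "(nat \<Rightarrow> nat \<Rightarrow> real) \<Rightarrow> nat \<Rightarrow> bool" where
  "support_is_tree Q n \<longleftrightarrow> connected_support Q n \<and> card (sedges Q n) = n - 1"

text \<open>child(u): the neighbour of u on its path to the root n, i.e. the neighbour v
  that is the root or is connected to the root without passing through u.\<close>
definition child :: "(nat \<Rightarrow> nat \<Rightarrow> real) \<Rightarrow> nat \<Rightarrow> nat \<Rightarrow> nat" where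
  "child Q n u = (THE v. sadj Q n u v \<and> (v = n \<or> reach_in Q n (nodes n - {u}) v n))"

definition topological_labeling :: "(nat \<Rightarrow> nat \<Rightarrow> real) \<Rightarrow> nat \<Rightarrow> bool" where
  "topological_labeling Q n \<longleftrightarrow> (\<forall>u\<in>nodes n. u \<noteq> n \<longrightarrow> u < child Q n u)"

definition par :: "(nat \<Rightarrow> nat \<Rightarrow> real) \<Rightarrow> nat \<Rightarrow> nat \<Rightarrow> nat set" where
  "par Q n u = {v \<in> nodes n. v \<noteq> n \<and> child Q n v = u}"

definition supp :: "(nat \<Rightarrow> nat \<Rightarrow> real) \<Rightarrow> nat \<Rightarrow> nat \<Rightarrow> nat set" where
  "supp Q n u = {w \<in> nodes n.
     (\<lambda>a b. a \<in> nodes n \<and> a \<noteq> n \<and> b = child Q n a)\<^sup>*\<^sup>* w u}"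

definition indic :: "real \<Rightarrow> real" where
  "indic \<alpha> = (if \<alpha> = 0 then 0 else 1)"

text \<open>Parametric cost f_u(alpha) (the minimum, written as an infimum; it is attained).\<close>
definition fcost :: "(nat \<Rightarrow> nat \<Rightarrow> real) \<Rightarrow> (nat \<Rightarrow> real) \<Rightarrow> (nat \<Rightarrow> real) \<Rightarrow> nat
    \<Rightarrow> nat \<Rightarrow> real \<Rightarrow> real" where
  "fcost Q c lam n u \<alpha> = Inf
     {(1/2) * (\<Sum>i\<in>supp Q n u. \<Sum>j\<in>supp Q n u. x i * Q i j * x j)
        + (\<Sum>i\<in>supp Q n u. c i * x i) + (\<Sum>i\<in>supp Q n u. lam i * z i)
      | x z. (\<forall>i\<in>supp Q n u. z i \<in> {0, 1} \<and> x i * (1 - z i) = 0) \<and> x u = \<alpha>}"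

definition fconj :: "(nat \<Rightarrow> nat \<Rightarrow> real) \<Rightarrow> (nat \<Rightarrow> real) \<Rightarrow> (nat \<Rightarrow> real) \<Rightarrow> nat
    \<Rightarrow> nat \<Rightarrow> real \<Rightarrow> real" where
  "fconj Q c lam n v \<beta> = (SUP \<xi>. \<beta> * \<xi> - fcost Q c lam n v \<xi>)"

end

theory Submission
  imports Defs
begin


lemma count_edges:
  fixes G :: "'a \<Rightarrow> 'a \<Rightarrow> bool"
  assumes fin: "finite V" and r: "r \<in> V"
    and GV: "\<And>x y. G x y \<Longrightarrow> x \<in> V \<and> y \<in> V \<and> x \<noteq> y"
    and conn: "\<forall>x\<in>V. G\<^sup>*\<^sup>* x r"
  shows "card V - 1 \<le> card {{x,y} | x y. G x y}"
proof -
  define d where "d x = (LEAST k. (G ^^ k) x r)" for x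
  have ex: "\<exists>k. (G ^^ k) x r" if "x \<in> V" for x using conn that rtranclp_imp_relpowp by fast
  have dk: "(G ^^ d x) x r" if "x\<in>V" for x using LeastI_ex[OF ex[OF that]] d_def by simp
  have nxt: "\<exists>y. G x y \<and> d y < d x" if xV: "x \<in> V" and xr: "x \<noteq> r" for x
  proof -
    from dk[OF xV] xr obtain m where dm: "d x = Suc m" by (cases "d x") auto
    from dk[OF xV] dm obtain y where y: "G x y" "(G ^^ m) y r" using relpowp_Suc_D2 by metis
    from y(2) have "d y \<le> m" unfolding d_def by (rule Least_le)
    with y dm show ?thesis by auto
  qed
  then have "\<forall>x. \<exists>y. x \<in> V \<and> x \<noteq> r \<longrightarrow> G x y \<and> d y < d x" by blast
  then obtain nx where nx: "\<And>x. x \<in> V \<Longrightarrow> x \<noteq> r \<Longrightarrow> G x (nx x) \<and> d (nx x) < d x"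
    by metis
  have inj: "inj_on (\<lambda>x. {x, nx x}) (V - {r})"
  proof (rule inj_onI)
    fix x x' assume xs: "x \<in> V - {r}" "x' \<in> V - {r}" and eq: "{x, nx x} = {x', nx x'}"
    show "x = x'"
    proof (rule ccontr)
      assume "x \<noteq> x'"
      with eq have e1: "x = nx x'" and e2: "x' = nx x" by (auto simp: doubleton_eq_iff)
      have "d x < d x'" using e1 nx[of x'] xs by auto
      moreover have "d x' < d x" using e2 nx[of x] xs by auto
      ultimately show False by simp
    qed
  qed
  have "card (V - {r}) \<le> card {{x,y} | x y. G x y}"
  proof (rule card_inj_on_le[OF inj])
    show "(\<lambda>x. {x, nx x}) ` (V - {r}) \<subseteq> {{x,y} | x y. G x y}" using nx by blast
    have "{{x,y} | x y. G x y} \<subseteq> Pow V" using GV by blast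
    then show "finite {{x,y} | x y. G x y}" using fin by (meson finite_Pow_iff finite_subset)
  qed
  then show ?thesis using r fin by simp
qed

lemma sq_expand: "(a::real) \<noteq> 0 \<Longrightarrow> a * (y + l / a)^2 = a*y^2 + 2*y*l + l^2/a"
  by (simp add: power2_eq_square field_simps)

definition qf :: "(nat \<Rightarrow> nat \<Rightarrow> real) \<Rightarrow> nat set \<Rightarrow> (nat \<Rightarrow> real) \<Rightarrow> real" where
  "qf A S x = (\<Sum>i\<in>S. \<Sum>j\<in>S. x i * A i j * x j)"

lemma quad_bdd:
  assumes "finite S"
  shows "(\<forall>i\<in>S. \<forall>j\<in>S. A i j = A j i) \<Longrightarrow> (\<forall>x. (\<exists>i\<in>S. x i \<noteq> 0) \<longrightarrow> qf A S x > 0)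
     \<Longrightarrow> \<exists>M. \<forall>x. qf A S x + 2 * (\<Sum>i\<in>S. c i * x i) \<ge> M"
  using assms
proof (induction S arbitrary: A c rule: finite_induct)
  case empty
  then show ?case by (auto simp: qf_def)
next
  case (insert k S)
  define a where "a = A k k"
  have "qf A (insert k S) (\<lambda>i. if i = k then 1 else 0) > 0"
    using insert.prems(2)[rule_format, of "\<lambda>i. if i = k then 1 else 0"] by auto
  moreover have e: "\<And>j. j \<in> S \<Longrightarrow> j \<noteq> k" using insert.hyps by auto
  ultimately have apos: "a > 0" using insert.hyps by (simp add: qf_def a_def e cong: sum.cong)
  define A' where "A' i j = A i j - A i k * A k j / a" for i j
  define L where "L x = (\<Sum>j\<in>S. A k j * x j)" for x
  have symS: "\<forall>i\<in>S. \<forall>j\<in>S. A i j = A j i" using insert.prems(1) by auto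
  have symk: "A j k = A k j" if "j \<in> S" for j using insert.prems(1) that by blast
  have decomp: "qf A (insert k S) x = a * (x k + L x / a)^2 + qf A' S x" for x
  proof -
    have row: "(\<Sum>j\<in>insert k S. x i * A i j * x j) = x i * A i k * x k + (\<Sum>j\<in>S. x i * A i j * x j)" for i
      using insert.hyps by simp
    have "qf A (insert k S) x = x k * A k k * x k + (\<Sum>j\<in>S. x k * A k j * x j)
         + (\<Sum>i\<in>S. x i * A i k * x k + (\<Sum>j\<in>S. x i * A i j * x j))"
      unfolding qf_def using insert.hyps row by simp
    also have "\<dots> = a * (x k)^2 + 2 * x k * L x + qf A S x"
    proof -
      have "(\<Sum>i\<in>S. x i * A i k * x k) = x k * L x"
        unfolding L_def sum_distrib_left by (rule sum.cong) (auto simp: symk)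
      moreover have "(\<Sum>j\<in>S. x k * A k j * x j) = x k * L x"
        unfolding L_def sum_distrib_left by (rule sum.cong) auto
      ultimately show ?thesis by (simp add: sum.distrib qf_def a_def power2_eq_square)
    qed
    also have "qf A S x = qf A' S x + (L x)^2 / a"
    proof -
      have "(\<Sum>i\<in>S. \<Sum>j\<in>S. x i * (A i k * A k j / a) * x j) = (L x)^2 / a"
      proof -
        have "(\<Sum>i\<in>S. \<Sum>j\<in>S. x i * (A i k * A k j / a) * x j)
            = (\<Sum>i\<in>S. \<Sum>j\<in>S. (A k i * x i) * (A k j * x j)) / a"
          unfolding sum_divide_distrib by (intro sum.cong refl) (simp add: symk mult_ac)
        also have "\<dots> = (L x) * (L x) / a"
          unfolding L_def sum_product by simp
        finally show ?thesis by (simp add: power2_eq_square)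
      qed
      then show ?thesis unfolding qf_def A'_def
        by (simp add: algebra_simps sum_subtractf)
    qed
    finally show ?thesis using sq_expand[of a "x k" "L x"] apos by simp
  qed
  have symA': "\<forall>i\<in>S. \<forall>j\<in>S. A' i j = A' j i" using symS symk unfolding A'_def by (auto simp: mult_ac)
  have pdA': "\<forall>x. (\<exists>i\<in>S. x i \<noteq> 0) \<longrightarrow> qf A' S x > 0"
  proof (intro allI impI)
    fix x :: "nat \<Rightarrow> real" assume nz: "\<exists>i\<in>S. x i \<noteq> 0"
    define y where "y = x(k := - L x / a)"
    have yS: "\<And>i. i \<in> S \<Longrightarrow> y i = x i" using insert.hyps unfolding y_def by auto
    have Ly: "L y = L x" unfolding L_def by (rule sum.cong) (auto simp: yS)
    have qy: "qf A' S y = qf A' S x" unfolding qf_def by (intro sum.cong) (auto simp: yS)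
    have "\<exists>i\<in>insert k S. y i \<noteq> 0" using nz yS by auto
    then have "qf A (insert k S) y > 0" using insert.prems(2) by blast
    then show "qf A' S x > 0" using decomp[of y] Ly qy apos by (simp add: y_def)
  qed
  define c' where "c' j = c j - c k * A k j / a" for j
  obtain M where M: "\<And>x. qf A' S x + 2 * (\<Sum>i\<in>S. c' i * x i) \<ge> M"
    using insert.IH[OF symA' pdA'] by blast
  show ?case
  proof (intro exI allI)
    fix x
    define t where "t = x k + L x / a"
    have lin: "(\<Sum>i\<in>S. c' i * x i) = (\<Sum>i\<in>S. c i * x i) - c k * L x / a"
      unfolding c'_def L_def by (simp add: algebra_simps sum_subtractf sum_distrib_left sum_divide_distrib)
    have sq: "a * t^2 + 2 * c k * t \<ge> - ((c k)^2) / a"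
    proof -
      have "0 \<le> (a * t + c k)^2 / a" using apos by simp
      also have "(a * t + c k)^2 / a = a * t^2 + 2 * c k * t + (c k)^2 / a"
        using apos by (simp add: field_simps power2_eq_square)
      finally show ?thesis by simp
    qed
    have "qf A (insert k S) x + 2 * (\<Sum>i\<in>insert k S. c i * x i)
        = a * t^2 + 2 * c k * t + (qf A' S x + 2 * (\<Sum>i\<in>S. c' i * x i))"
    proof -
      have "2 * c k * t = 2 * c k * x k + 2 * (c k * L x / a)" unfolding t_def by (simp add: algebra_simps)
      moreover have "(\<Sum>i\<in>insert k S. c i * x i) = c k * x k + (\<Sum>i\<in>S. c i * x i)"
        using insert.hyps by simp
      ultimately show ?thesis using decomp[of x] lin unfolding t_def[symmetric] by linarith
    qed
    also have "\<dots> \<ge> - ((c k)^2) / a + M" using sq M[of x] by linarith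
    finally show "qf A (insert k S) x + 2 * (\<Sum>i\<in>insert k S. c i * x i) \<ge> - ((c k)^2) / a + M" .
  qed
qed



locale tsetup =
  fixes Q :: "nat \<Rightarrow> nat \<Rightarrow> real" and n :: nat
  assumes sym: "\<forall>i\<in>nodes n. \<forall>j\<in>nodes n. Q i j = Q j i"
    and tree: "support_is_tree Q n"
    and topo: "topological_labeling Q n"
    and npos: "1 \<le> n"
begin

abbreviation "adj \<equiv> sadj Q n"
abbreviation "V \<equiv> nodes n"

lemma n_in: "n \<in> V" using npos by (simp add: nodes_def)

lemma finV: "finite V" by (simp add: nodes_def)

lemma cardV: "card V = n" by (simp add: nodes_def)

lemma adjV: "adj x y \<Longrightarrow> x \<in> V \<and> y \<in> V \<and> x \<noteq> y" by (simp add: sadj_def)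

lemma reach_full: "reach_in Q n V a b = adj\<^sup>*\<^sup>* a b"
proof -
  have "(\<lambda>x y. x \<in> V \<and> y \<in> V \<and> adj x y) = adj" using adjV by (intro ext) blast
  then show ?thesis by (simp add: reach_in_def)
qed

lemma conn: "a \<in> V \<Longrightarrow> adj\<^sup>*\<^sup>* a n"
  using tree n_in unfolding support_is_tree_def connected_support_def reach_full by blast

lemma card_E: "card (sedges Q n) = n - 1"
  using tree unfolding support_is_tree_def by blast

lemma fin_E: "finite (sedges Q n)"
proof -
  have "sedges Q n \<subseteq> Pow V" unfolding sedges_def using adjV by blast
  then show ?thesis using finV by (meson finite_Pow_iff finite_subset)
qed

lemma child_exists:
  assumes a: "a \<in> V" "a \<noteq> n"
  shows "\<exists>v. adj a v \<and> reach_in Q n (V - {a}) v n"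
proof -
  have "adj\<^sup>*\<^sup>* x n \<Longrightarrow> (\<exists>v. adj a v \<and> reach_in Q n (V - {a}) v n)
      \<or> (x \<noteq> a \<and> reach_in Q n (V - {a}) x n)" for x
  proof (induction rule: converse_rtranclp_induct)
    case base
    then show ?case using a by (simp add: reach_in_def)
  next
    case (step x y)
    show ?case
    proof (cases "\<exists>v. adj a v \<and> reach_in Q n (V - {a}) v n")
      case True then show ?thesis by blast
    next
      case False
      with step.IH have y: "y \<noteq> a" "reach_in Q n (V - {a}) y n" by auto
      show ?thesis
      proof (cases "x = a")
        case True then show ?thesis using y step.hyps(1) by blast
      next
        case False
        have "(\<lambda>x y. x \<in> V - {a} \<and> y \<in> V - {a} \<and> adj x y) x y"
          using False y(1) step.hyps(1) adjV by blast
        then have "reach_in Q n (V - {a}) x n" using y(2) unfolding reach_in_def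
          by (rule converse_rtranclp_into_rtranclp)
        then show ?thesis using False by blast
      qed
    qed
  qed
  then show ?thesis using conn[OF a(1)] by blast
qed

lemma child_unique:
  assumes a: "a \<in> V" "a \<noteq> n"
    and v1: "adj a v1" "reach_in Q n (V - {a}) v1 n"
    and v2: "adj a v2" "reach_in Q n (V - {a}) v2 n"
  shows "v1 = v2"
proof (rule ccontr)
  assume ne: "v1 \<noteq> v2"
  define G where "G x y \<longleftrightarrow> adj x y \<and> {x,y} \<noteq> {a,v1}" for x y
  have mono: "G\<^sup>*\<^sup>* v n" if "reach_in Q n (V - {a}) v n" for v
    using that unfolding reach_in_def
  proof (induction rule: rtranclp_induct)
    case base then show ?case by simp
  next
    case (step y z)
    then have "G y z" unfolding G_def by (auto simp: doubleton_eq_iff)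
    with step.IH show ?case by (rule rtranclp.rtrancl_into_rtrancl)
  qed
  have "G\<^sup>*\<^sup>* x n" if "adj\<^sup>*\<^sup>* x n" for x
    using that
  proof (induction rule: converse_rtranclp_induct)
    case base then show ?case by simp
  next
    case (step x y)
    show ?case
    proof (cases "{x,y} = {a,v1}")
      case False
      then have "G x y" using step.hyps(1) unfolding G_def by blast
      then show ?thesis using step.IH by (rule converse_rtranclp_into_rtranclp)
    next
      case True
      then have "(x = a \<and> y = v1) \<or> (x = v1 \<and> y = a)" by (auto simp: doubleton_eq_iff)
      then show ?thesis
      proof
        assume "x = v1 \<and> y = a" then show ?thesis using mono[OF v1(2)] by simp
      next
        assume xa: "x = a \<and> y = v1"
        have "v2 \<noteq> a" using v2(1) adjV by blast
        then have "G a v2" using v2(1) ne unfolding G_def by (auto simp: doubleton_eq_iff)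
        then show ?thesis using mono[OF v2(2)] xa by (simp add: converse_rtranclp_into_rtranclp)
      qed
    qed
  qed
  then have connG: "\<forall>x\<in>V. G\<^sup>*\<^sup>* x n" using conn by blast
  have GV: "G x y \<Longrightarrow> x \<in> V \<and> y \<in> V \<and> x \<noteq> y" for x y using adjV unfolding G_def by blast
  have cnt: "card V - 1 \<le> card {{x,y} | x y. G x y}"
    by (rule count_edges[OF finV n_in GV connG])
  have eqE: "{{x,y} | x y. G x y} = sedges Q n - {{a,v1}}"
    unfolding G_def sedges_def by blast
  have mem: "{a,v1} \<in> sedges Q n" using v1(1) unfolding sedges_def by blast
  have "card (sedges Q n - {{a,v1}}) = n - 2" using card_E mem fin_E by simp
  moreover have "n \<ge> 2" using a npos by (auto simp: nodes_def)
  ultimately show False using cnt eqE cardV by simp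
qed

lemma child_adj:
  assumes a: "a \<in> V" "a \<noteq> n"
  shows "adj a (child Q n a)"
proof -
  define P where "P v \<longleftrightarrow> adj a v \<and> (v = n \<or> reach_in Q n (V - {a}) v n)" for v
  have Pr: "P v \<Longrightarrow> adj a v \<and> reach_in Q n (V - {a}) v n" for v
    unfolding P_def reach_in_def by auto
  obtain v where v: "adj a v" "reach_in Q n (V - {a}) v n" using child_exists[OF a] by blast
  have "\<exists>!v. P v"
  proof
    show "P v" using v unfolding P_def by blast
    fix w assume "P w" then show "w = v" using Pr child_unique[OF a] v by blast
  qed
  then have "P (THE v. P v)" by (rule theI')
  then show ?thesis unfolding child_def P_def by blast
qed

lemma child_props:
  assumes "a \<in> V" "a \<noteq> n"
  shows "child Q n a \<in> V" "a < child Q n a"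
  using child_adj[OF assms] adjV topo assms unfolding topological_labeling_def by auto

lemma adj_child:
  assumes "adj i j"
  shows "(i \<noteq> n \<and> i \<in> V \<and> j = child Q n i) \<or> (j \<noteq> n \<and> j \<in> V \<and> i = child Q n j)"
proof -
  define E' where "E' = (\<lambda>a. {a, child Q n a}) ` (V - {n})"
  have sub: "E' \<subseteq> sedges Q n" unfolding E'_def sedges_def using child_adj by blast
  have inj: "inj_on (\<lambda>a. {a, child Q n a}) (V - {n})"
  proof (rule inj_onI)
    fix x y assume xy: "x \<in> V - {n}" "y \<in> V - {n}" and eq: "{x, child Q n x} = {y, child Q n y}"
    show "x = y"
    proof (rule ccontr)
      assume "x \<noteq> y"
      with eq have "x = child Q n y" "y = child Q n x" by (auto simp: doubleton_eq_iff)
      then show False using child_props(2)[of x] child_props(2)[of y] xy by auto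
    qed
  qed
  have "card E' = n - 1" unfolding E'_def using card_image[OF inj] cardV n_in finV by simp
  then have "E' = sedges Q n" using card_subset_eq[OF fin_E sub] card_E by simp
  moreover have "{i,j} \<in> sedges Q n" using assms unfolding sedges_def by blast
  ultimately obtain a where "a \<in> V - {n}" "{i,j} = {a, child Q n a}" unfolding E'_def by blast
  then show ?thesis by (auto simp: doubleton_eq_iff)
qed

end



context tsetup
begin

definition Rc :: "nat \<Rightarrow> nat \<Rightarrow> bool" where
  "Rc = (\<lambda>a b. a \<in> nodes n \<and> a \<noteq> n \<and> b = child Q n a)"

lemma supp_eq: "supp Q n u = {w \<in> V. Rc\<^sup>*\<^sup>* w u}"
  unfolding supp_def Rc_def by simp

lemma Rc_le: "Rc\<^sup>*\<^sup>* w u \<Longrightarrow> w \<le> u"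
proof (induction rule: rtranclp_induct)
  case base then show ?case by simp
next
  case (step y z) then show ?case using child_props(2)[of y] unfolding Rc_def by auto
qed

lemma Rc_lt: "Rc\<^sup>*\<^sup>* w u \<Longrightarrow> w \<noteq> u \<Longrightarrow> w < u"
  using Rc_le le_neq_implies_less by blast

lemma Rc_first: "Rc\<^sup>*\<^sup>* w u \<Longrightarrow> w \<noteq> u \<Longrightarrow> w \<in> V \<and> w \<noteq> n \<and> Rc\<^sup>*\<^sup>* (child Q n w) u"
  by (erule converse_rtranclpE) (auto simp: Rc_def)

lemma Rc_det: "Rc\<^sup>*\<^sup>* a b \<Longrightarrow> Rc\<^sup>*\<^sup>* a c \<Longrightarrow> Rc\<^sup>*\<^sup>* b c \<or> Rc\<^sup>*\<^sup>* c b"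
proof (induction arbitrary: c rule: converse_rtranclp_induct)
  case base then show ?case by simp
next
  case (step a a')
  show ?case
  proof (cases "a = c")
    case True
    then have "Rc\<^sup>*\<^sup>* c b" using step.hyps by (meson converse_rtranclp_into_rtranclp)
    then show ?thesis by simp
  next
    case False
    have "Rc\<^sup>*\<^sup>* a' c" using Rc_first[OF step.prems False] step.hyps(1) unfolding Rc_def by simp
    then show ?thesis using step.IH by blast
  qed
qed

lemma supp_sub: "supp Q n u \<subseteq> V" unfolding supp_eq by blast

lemma supp_fin: "finite (supp Q n u)" using supp_sub finV finite_subset by blast

lemma supp_self: "u \<in> V \<Longrightarrow> u \<in> supp Q n u" unfolding supp_eq by simp

lemma supp_le: "i \<in> supp Q n v \<Longrightarrow> i \<le> v" unfolding supp_eq using Rc_le by blast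

lemma par_props:
  assumes "v \<in> par Q n u"
  shows "v \<in> V" "v \<noteq> n" "child Q n v = u" "v < u" "u \<in> V" "Rc v u"
  using assms child_props[of v] unfolding par_def Rc_def by auto

lemma par_fin: "finite (par Q n u)"
  using finV unfolding par_def by simp

lemma supp_split:
  assumes u: "u \<in> V"
  shows "supp Q n u = insert u (\<Union>v\<in>par Q n u. supp Q n v)"
proof
  show "supp Q n u \<subseteq> insert u (\<Union>v\<in>par Q n u. supp Q n v)"
  proof
    fix w assume w: "w \<in> supp Q n u"
    show "w \<in> insert u (\<Union>v\<in>par Q n u. supp Q n v)"
    proof (cases "w = u")
      case False
      from w have wV: "w \<in> V" and r: "Rc\<^sup>*\<^sup>* w u" unfolding supp_eq by auto
      from r False obtain y where "Rc\<^sup>*\<^sup>* w y" "Rc y u"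
        by (metis rtranclp.cases)
      then have "y \<in> par Q n u" "w \<in> supp Q n y" using wV unfolding Rc_def par_def supp_eq by auto
      then show ?thesis by blast
    qed simp
  qed
next
  show "insert u (\<Union>v\<in>par Q n u. supp Q n v) \<subseteq> supp Q n u"
    using u par_props(6) unfolding supp_eq by (auto intro: rtranclp.rtrancl_into_rtrancl)
qed

lemma u_notin: "v \<in> par Q n u \<Longrightarrow> u \<notin> supp Q n v"
  using supp_le par_props(4) by fastforce

lemma supp_disj:
  assumes v: "v \<in> par Q n u" and w: "w \<in> par Q n u" and ne: "v \<noteq> w"
  shows "supp Q n v \<inter> supp Q n w = {}"
proof (rule ccontr)
  assume "supp Q n v \<inter> supp Q n w \<noteq> {}"
  then obtain i where "Rc\<^sup>*\<^sup>* i v" "Rc\<^sup>*\<^sup>* i w" unfolding supp_eq by blast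
  then have "Rc\<^sup>*\<^sup>* v w \<or> Rc\<^sup>*\<^sup>* w v" by (rule Rc_det)
  moreover have False if "Rc\<^sup>*\<^sup>* x y" "x \<in> par Q n u" "y \<in> par Q n u" "x \<noteq> y" for x y
  proof -
    from Rc_first[OF that(1,4)] have "Rc\<^sup>*\<^sup>* u y" using par_props(3)[OF that(2)] by simp
    then have "u \<le> y" by (rule Rc_le)
    then show False using par_props(4)[OF that(3)] by simp
  qed
  ultimately show False using v w ne by metis
qed

lemma step_in: "i \<in> supp Q n v \<Longrightarrow> i \<noteq> v \<Longrightarrow> child Q n i \<in> supp Q n v \<and> i \<noteq> n"
  unfolding supp_eq using Rc_first child_props(1) by blast

lemma Q_adj: "i \<in> V \<Longrightarrow> j \<in> V \<Longrightarrow> i \<noteq> j \<Longrightarrow> Q i j \<noteq> 0 \<Longrightarrow>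
   (i \<noteq> n \<and> j = child Q n i) \<or> (j \<noteq> n \<and> i = child Q n j)"
  using adj_child unfolding sadj_def by blast

lemma Z1:
  assumes w: "w \<in> par Q n u" and j: "j \<in> supp Q n w" "j \<noteq> w"
  shows "Q u j = 0"
proof (rule ccontr)
  assume nz: "Q u j \<noteq> 0"
  have ju: "j < u" using supp_le[OF j(1)] par_props(4)[OF w] by simp
  have uV: "u \<in> V" using par_props(5)[OF w] .
  have jV: "j \<in> V" using j(1) supp_sub by blast
  from Q_adj[OF uV jV _ nz] ju consider "u \<noteq> n" "j = child Q n u" | "j \<noteq> n" "u = child Q n j" by force
  then show False
  proof cases
    case 1 then show False using child_props(2)[OF uV] ju by simp
  next
    case 2
    then have "j \<in> par Q n u" using jV unfolding par_def by simp
    then show False using supp_disj[OF _ w j(2)] supp_self[OF jV] j(1) by blast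
  qed
qed

lemma H:
  assumes v: "v \<in> par Q n u" and w: "w \<in> par Q n u" and ne: "v \<noteq> w"
    and i: "i \<in> supp Q n v" and j: "j \<in> supp Q n w" and ji: "j = child Q n i" and "i \<noteq> n"
  shows False
proof (cases "i = v")
  case True
  then have "j = u" using ji par_props(3)[OF v] by simp
  then show False using supp_le[OF j] par_props(4)[OF w] by simp
next
  case False
  then have "j \<in> supp Q n v" using step_in[OF i] ji by simp
  then show False using supp_disj[OF v w ne] j by blast
qed

lemma Z2:
  assumes v: "v \<in> par Q n u" and w: "w \<in> par Q n u" and ne: "v \<noteq> w"
    and i: "i \<in> supp Q n v" and j: "j \<in> supp Q n w"
  shows "Q i j = 0"
proof (rule ccontr)
  assume nz: "Q i j \<noteq> 0"
  have "i \<noteq> j" using supp_disj[OF v w ne] i j by blast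
  moreover have "i \<in> V" "j \<in> V" using i j supp_sub by blast+
  ultimately have "(i \<noteq> n \<and> j = child Q n i) \<or> (j \<noteq> n \<and> i = child Q n j)" using Q_adj nz by blast
  then show False using H[OF v w ne i j] H[OF w v ne[symmetric] j i] by blast
qed

end



lemma inf_char:
  fixes T :: "real set"
  assumes lb: "\<forall>t\<in>T. m \<le> t" and ap: "\<forall>\<epsilon>>0. \<exists>t\<in>T. t < m + \<epsilon>"
  shows "Inf T = m"
proof -
  have ne: "T \<noteq> {}" using ap by (metis empty_iff zero_less_one)
  have bdd: "bdd_below T" using lb by (auto simp: bdd_below_def)
  have "m \<le> Inf T" using ne lb by (intro cInf_greatest) auto
  moreover have "\<not> Inf T > m"
  proof
    assume "Inf T > m"
    then obtain t where "t \<in> T" "t < m + (Inf T - m)" using ap by (metis diff_gt_0_iff_gt)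
    then show False using cInf_lower[OF _ bdd] by fastforce
  qed
  ultimately show ?thesis by simp
qed

lemma sum_single:
  assumes "finite A" "a \<in> A" "\<forall>j\<in>A. j \<noteq> a \<longrightarrow> g j = 0"
  shows "sum g A = g a"
proof -
  have "sum g A = sum g {a}" using assms by (intro sum.mono_neutral_right) auto
  then show ?thesis by simp
qed

definition cst :: "(nat \<Rightarrow> nat \<Rightarrow> real) \<Rightarrow> (nat \<Rightarrow> real) \<Rightarrow> (nat \<Rightarrow> real) \<Rightarrow> nat set
   \<Rightarrow> (nat \<Rightarrow> real) \<Rightarrow> (nat \<Rightarrow> real) \<Rightarrow> real" where
  "cst Q c lam S x z = (1/2) * qf Q S x + (\<Sum>i\<in>S. c i * x i) + (\<Sum>i\<in>S. lam i * z i)"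

definition feas :: "nat set \<Rightarrow> (nat \<Rightarrow> real) \<Rightarrow> (nat \<Rightarrow> real) \<Rightarrow> bool" where
  "feas S x z \<longleftrightarrow> (\<forall>i\<in>S. z i \<in> {0, 1} \<and> x i * (1 - z i) = 0)"

lemma fcost_eq: "fcost Q c lam n u \<alpha> =
   Inf {cst Q c lam (supp Q n u) x z | x z. feas (supp Q n u) x z \<and> x u = \<alpha>}"
  unfolding fcost_def cst_def qf_def feas_def by simp

lemma cst_cong: "(\<forall>i\<in>S. x i = x' i \<and> z i = z' i) \<Longrightarrow> cst Q c lam S x z = cst Q c lam S x' z'"
  unfolding cst_def qf_def by (intro arg_cong2[where f="(+)"] arg_cong2[where f="(*)"] sum.cong refl) auto

locale msetup = tsetup +
  fixes c lam :: "nat \<Rightarrow> real"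
  assumes posdef: "\<forall>x :: nat \<Rightarrow> real. (\<exists>i\<in>nodes n. x i \<noteq> 0) \<longrightarrow>
                   (\<Sum>i\<in>nodes n. \<Sum>j\<in>nodes n. x i * Q i j * x j) > 0"
    and lam_pos: "\<forall>i\<in>nodes n. lam i > 0"
begin

abbreviation "C \<equiv> cst Q c lam"
abbreviation "S \<equiv> supp Q n"

lemma pd_sub:
  assumes sub: "A \<subseteq> V"
  shows "\<forall>x. (\<exists>i\<in>A. x i \<noteq> 0) \<longrightarrow> qf Q A x > 0"
proof (intro allI impI)
  fix x :: "nat \<Rightarrow> real" assume nz: "\<exists>i\<in>A. x i \<noteq> 0"
  define y where "y i = (if i \<in> A then x i else 0)" for i
  have "\<exists>i\<in>V. y i \<noteq> 0" using nz sub unfolding y_def by auto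
  then have pos: "(\<Sum>i\<in>V. \<Sum>j\<in>V. y i * Q i j * y j) > 0" using posdef by blast
  have "(\<Sum>i\<in>V. \<Sum>j\<in>V. y i * Q i j * y j) = (\<Sum>i\<in>A. \<Sum>j\<in>V. y i * Q i j * y j)"
    using finV sub by (intro sum.mono_neutral_right) (auto simp: y_def)
  also have "\<dots> = (\<Sum>i\<in>A. \<Sum>j\<in>A. y i * Q i j * y j)"
    using finV sub by (intro sum.cong refl sum.mono_neutral_right) (auto simp: y_def)
  also have "\<dots> = qf Q A x" unfolding qf_def y_def by (intro sum.cong refl) auto
  finally show "qf Q A x > 0" using pos by simp
qed

lemma bdd:
  assumes v: "v \<in> V"
  shows "\<exists>M. \<forall>x z. feas (S v) x z \<longrightarrow> C (S v) x z - \<beta> * x v \<ge> M"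
proof -
  define c'' where "c'' i = c i - (if i = v then \<beta> else 0)" for i
  have symS: "\<forall>i\<in>S v. \<forall>j\<in>S v. Q i j = Q j i" using sym supp_sub by blast
  obtain M where M: "\<And>x. qf Q (S v) x + 2 * (\<Sum>i\<in>S v. c'' i * x i) \<ge> M"
    using quad_bdd[OF supp_fin symS pd_sub[OF supp_sub]] by blast
  show ?thesis
  proof (intro exI allI impI)
    fix x z assume f: "feas (S v) x z"
    have lin: "(\<Sum>i\<in>S v. c'' i * x i) = (\<Sum>i\<in>S v. c i * x i) - \<beta> * x v"
    proof -
      have "(\<Sum>i\<in>S v. c'' i * x i) = (\<Sum>i\<in>S v. c i * x i) - (\<Sum>i\<in>S v. (if i = v then \<beta> * x i else 0))"
      proof -
        have "(\<Sum>i\<in>S v. c'' i * x i) = (\<Sum>i\<in>S v. c i * x i - (if i = v then \<beta> * x i else 0))"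
          unfolding c''_def by (intro sum.cong refl) (simp add: algebra_simps)
        then show ?thesis by (simp only: sum_subtractf)
      qed
      also have "(\<Sum>i\<in>S v. (if i = v then \<beta> * x i else 0)) = \<beta> * x v"
        using supp_self[OF v] supp_fin by simp
      finally show ?thesis .
    qed
    have z: "(\<Sum>i\<in>S v. lam i * z i) \<ge> 0"
    proof (rule sum_nonneg)
      fix i assume "i \<in> S v"
      then have "lam i > 0" "z i \<in> {0,1}" using lam_pos supp_sub f unfolding feas_def by auto
      then show "lam i * z i \<ge> 0" by auto
    qed
    show "C (S v) x z - \<beta> * x v \<ge> M / 2"
      using M[of x] lin z unfolding cst_def by linarith
  qed
qed

definition Tv :: "nat \<Rightarrow> real \<Rightarrow> real set" where
  "Tv v \<gamma> = {\<gamma> * x v + C (S v) x z | x z. feas (S v) x z}"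

lemma Tv_ne: "Tv v \<gamma> \<noteq> {}"
proof -
  have "feas (S v) (\<lambda>i. 0) (\<lambda>i. 0)" unfolding feas_def by simp
  then show ?thesis unfolding Tv_def by blast
qed

lemma Tv_bdd: "v \<in> V \<Longrightarrow> bdd_below (Tv v \<gamma>)"
proof -
  assume v: "v \<in> V"
  obtain M where M: "\<And>x z. feas (S v) x z \<Longrightarrow> C (S v) x z - (- \<gamma>) * x v \<ge> M"
    using bdd[OF v, of "-\<gamma>"] by blast
  show ?thesis unfolding bdd_below_def Tv_def using M by (intro exI[of _ M]) fastforce
qed

lemma conj_eq:
  assumes v: "v \<in> V"
  shows "Inf (Tv v \<gamma>) = - fconj Q c lam n v (- \<gamma>)"
proof -
  define Cs where "Cs \<xi> = {C (S v) x z | x z. feas (S v) x z \<and> x v = \<xi>}" for \<xi>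
  have fc: "fcost Q c lam n v \<xi> = Inf (Cs \<xi>)" for \<xi> unfolding fcost_eq Cs_def ..
  obtain M where M: "\<And>x z. feas (S v) x z \<Longrightarrow> C (S v) x z - (- \<gamma>) * x v \<ge> M"
    using bdd[OF v, of "-\<gamma>"] by blast
  have Cs_ne: "Cs \<xi> \<noteq> {}" for \<xi>
  proof -
    have "feas (S v) (\<lambda>i. if i = v then \<xi> else 0) (\<lambda>i. 1)" unfolding feas_def by simp
    then show ?thesis unfolding Cs_def by fastforce
  qed
  have Cs_bdd: "bdd_below (Cs \<xi>)" for \<xi>
    unfolding bdd_below_def Cs_def using M by (intro exI[of _ "M - \<gamma> * \<xi>"]) fastforce
  define h where "h \<xi> = \<gamma> * \<xi> + fcost Q c lam n v \<xi>" for \<xi>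
  have A: "Inf (Tv v \<gamma>) \<le> h \<xi>" for \<xi>
  proof -
    have "Inf (Tv v \<gamma>) - \<gamma> * \<xi> \<le> Inf (Cs \<xi>)"
    proof (rule cInf_greatest[OF Cs_ne])
      fix t assume "t \<in> Cs \<xi>"
      then obtain x z where "feas (S v) x z" "x v = \<xi>" "t = C (S v) x z" unfolding Cs_def by blast
      then have "\<gamma> * \<xi> + t \<in> Tv v \<gamma>" unfolding Tv_def by blast
      then have "Inf (Tv v \<gamma>) \<le> \<gamma> * \<xi> + t" by (rule cInf_lower[OF _ Tv_bdd[OF v]])
      then show "Inf (Tv v \<gamma>) - \<gamma> * \<xi> \<le> t" by simp
    qed
    then show ?thesis unfolding h_def fc by simp
  qed
  have rbdd: "bdd_below (range h)" using A unfolding bdd_below_def by blast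
  have B: "Inf (range h) \<le> Inf (Tv v \<gamma>)"
  proof (rule cInf_greatest[OF Tv_ne])
    fix t assume "t \<in> Tv v \<gamma>"
    then obtain x z where xz: "feas (S v) x z" "t = \<gamma> * x v + C (S v) x z" unfolding Tv_def by blast
    have "C (S v) x z \<in> Cs (x v)" unfolding Cs_def using xz by blast
    then have "fcost Q c lam n v (x v) \<le> C (S v) x z" unfolding fc by (rule cInf_lower[OF _ Cs_bdd])
    then have "h (x v) \<le> t" unfolding h_def xz by simp
    moreover have "Inf (range h) \<le> h (x v)" by (rule cInf_lower[OF _ rbdd]) simp
    ultimately show "Inf (range h) \<le> t" by simp
  qed
  have B2: "Inf (Tv v \<gamma>) \<le> Inf (range h)" using A by (intro cInf_greatest) auto
  have "fconj Q c lam n v (- \<gamma>) = Sup (uminus ` range h)"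
    unfolding fconj_def h_def by (simp add: image_image)
  also have "\<dots> = - Inf (range h)" by (simp add: Inf_real_def)
  finally show ?thesis using B B2 by simp
qed

end



context msetup
begin

lemma sum_split:
  assumes u: "u \<in> V"
  shows "sum f (S u) = f u + (\<Sum>v\<in>par Q n u. sum f (S v))"
proof -
  have fU: "finite (\<Union>v\<in>par Q n u. S v)" by (simp add: par_fin supp_fin)
  have nu: "u \<notin> (\<Union>v\<in>par Q n u. S v)" using u_notin by blast
  have "sum f (S u) = f u + sum f (\<Union>v\<in>par Q n u. S v)"
    unfolding supp_split[OF u] using fU nu by simp
  also have "sum f (\<Union>v\<in>par Q n u. S v) = (\<Sum>v\<in>par Q n u. sum f (S v))"
    using par_fin supp_fin supp_disj by (intro sum.UNION_disjoint) auto
  finally show ?thesis .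
qed

lemma decomp:
  assumes u: "u \<in> V"
  shows "C (S u) x z = (1/2) * Q u u * (x u)^2 + c u * x u + lam u * z u
     + (\<Sum>v\<in>par Q n u. Q u v * x u * x v + C (S v) x z)"
proof -
  let ?P = "par Q n u"
  have row: "(\<Sum>j\<in>S u. x i * Q i j * x j) = x i * Q i u * x u + (\<Sum>w\<in>?P. \<Sum>j\<in>S w. x i * Q i j * x j)" for i
    by (rule sum_split[OF u])
  have q1: "qf Q (S u) x = (\<Sum>j\<in>S u. x u * Q u j * x j) + (\<Sum>v\<in>?P. \<Sum>i\<in>S v. \<Sum>j\<in>S u. x i * Q i j * x j)"
    unfolding qf_def by (rule sum_split[OF u])
  have rowu: "(\<Sum>j\<in>S u. x u * Q u j * x j) = x u * Q u u * x u + (\<Sum>w\<in>?P. x u * Q u w * x w)"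
  proof -
    have "(\<Sum>j\<in>S w. x u * Q u j * x j) = x u * Q u w * x w" if w: "w \<in> ?P" for w
      using Z1[OF w] supp_fin supp_self[OF par_props(1)[OF w]] by (intro sum_single) auto
    then show ?thesis unfolding row by simp
  qed
  have rowv: "(\<Sum>i\<in>S v. \<Sum>j\<in>S u. x i * Q i j * x j) = x v * Q v u * x u + qf Q (S v) x"
    if v: "v \<in> ?P" for v
  proof -
    have inner: "(\<Sum>w\<in>?P. \<Sum>j\<in>S w. x i * Q i j * x j) = (\<Sum>j\<in>S v. x i * Q i j * x j)"
      if i: "i \<in> S v" for i
    proof (rule sum_single[OF par_fin v], intro ballI impI)
      fix w assume "w \<in> ?P" "w \<noteq> v"
      then show "(\<Sum>j\<in>S w. x i * Q i j * x j) = 0" using Z2[OF v _ _ i] by (intro sum.neutral) auto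
    qed
    have col: "(\<Sum>i\<in>S v. x i * Q i u * x u) = x v * Q v u * x u"
    proof (rule sum_single[OF supp_fin supp_self[OF par_props(1)[OF v]]], intro ballI impI)
      fix i assume i: "i \<in> S v" "i \<noteq> v"
      have "Q i u = Q u i" using sym supp_sub i(1) u by blast
      then show "x i * Q i u * x u = 0" using Z1[OF v i] by simp
    qed
    have "(\<Sum>i\<in>S v. \<Sum>j\<in>S u. x i * Q i j * x j)
        = (\<Sum>i\<in>S v. x i * Q i u * x u + (\<Sum>j\<in>S v. x i * Q i j * x j))"
      unfolding row using inner by (intro sum.cong refl) auto
    also have "\<dots> = x v * Q v u * x u + qf Q (S v) x"
      unfolding sum.distrib col qf_def ..
    finally show ?thesis .
  qed
  have symv: "Q v u = Q u v" if "v \<in> ?P" for v using sym par_props(1)[OF that] u by blast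
  have qfu: "qf Q (S u) x = Q u u * (x u)^2 + 2 * (\<Sum>v\<in>?P. Q u v * x u * x v) + (\<Sum>v\<in>?P. qf Q (S v) x)"
  proof -
    have a: "(\<Sum>w\<in>?P. x u * Q u w * x w) = (\<Sum>v\<in>?P. Q u v * x u * x v)"
      by (intro sum.cong refl) (simp add: mult_ac)
    have b: "(\<Sum>v\<in>?P. x v * Q v u * x u + qf Q (S v) x) = (\<Sum>v\<in>?P. Q u v * x u * x v) + (\<Sum>v\<in>?P. qf Q (S v) x)"
      unfolding sum.distrib using symv by (intro arg_cong2[where f="(+)"] sum.cong refl) (auto simp: mult_ac)
    have "qf Q (S u) x = x u * Q u u * x u + (\<Sum>w\<in>?P. x u * Q u w * x w)
        + (\<Sum>v\<in>?P. x v * Q v u * x u + qf Q (S v) x)"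
      unfolding q1 rowu using rowv by simp
    then show ?thesis unfolding a b by (simp add: power2_eq_square mult_ac)
  qed
  have lc: "(\<Sum>i\<in>S u. c i * x i) = c u * x u + (\<Sum>v\<in>?P. \<Sum>i\<in>S v. c i * x i)"
    by (rule sum_split[OF u])
  have ll: "(\<Sum>i\<in>S u. lam i * z i) = lam u * z u + (\<Sum>v\<in>?P. \<Sum>i\<in>S v. lam i * z i)"
    by (rule sum_split[OF u])
  have rhs: "(\<Sum>v\<in>?P. Q u v * x u * x v + C (S v) x z)
     = (\<Sum>v\<in>?P. Q u v * x u * x v) + (1/2) * (\<Sum>v\<in>?P. qf Q (S v) x)
       + (\<Sum>v\<in>?P. \<Sum>i\<in>S v. c i * x i) + (\<Sum>v\<in>?P. \<Sum>i\<in>S v. lam i * z i)"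
    unfolding cst_def by (simp add: sum.distrib sum_distrib_left)
  show ?thesis unfolding rhs unfolding cst_def qfu lc ll by (simp add: algebra_simps)
qed

lemma recur:
  assumes u: "u \<in> V"
  shows "fcost Q c lam n u \<alpha> = (1/2) * Q u u * \<alpha>^2 + c u * \<alpha> + lam u * indic \<alpha>
     + (\<Sum>v\<in>par Q n u. Inf (Tv v (Q u v * \<alpha>)))"
proof -
  let ?P = "par Q n u"
  let ?K = "(1/2) * Q u u * \<alpha>^2 + c u * \<alpha> + lam u * indic \<alpha>"
  let ?g = "\<lambda>v. Inf (Tv v (Q u v * \<alpha>))"
  have sub: "S v \<subseteq> S u" if "v \<in> ?P" for v using supp_split[OF u] that by blast
  show ?thesis unfolding fcost_eq
  proof (rule inf_char)
    show "\<forall>t\<in>{C (S u) x z |x z. feas (S u) x z \<and> x u = \<alpha>}. ?K + sum ?g ?P \<le> t"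
    proof (intro ballI)
      fix t assume "t \<in> {C (S u) x z |x z. feas (S u) x z \<and> x u = \<alpha>}"
      then obtain x z where f: "feas (S u) x z" and xu: "x u = \<alpha>" and t: "t = C (S u) x z" by blast
      have zu: "lam u * indic \<alpha> \<le> lam u * z u"
      proof -
        have "z u \<in> {0,1}" "x u * (1 - z u) = 0" using f supp_self[OF u] unfolding feas_def by auto
        moreover have "lam u > 0" using lam_pos u by blast
        ultimately show ?thesis using xu unfolding indic_def by auto
      qed
      have br: "?g v \<le> Q u v * x u * x v + C (S v) x z" if v: "v \<in> ?P" for v
      proof -
        have "feas (S v) x z" using f sub[OF v] unfolding feas_def by blast
        then have "Q u v * \<alpha> * x v + C (S v) x z \<in> Tv v (Q u v * \<alpha>)" unfolding Tv_def by blast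
        then show ?thesis using xu by (auto intro: cInf_lower[OF _ Tv_bdd[OF par_props(1)[OF v]]])
      qed
      have "sum ?g ?P \<le> (\<Sum>v\<in>?P. Q u v * x u * x v + C (S v) x z)" using br by (rule sum_mono)
      then show "?K + sum ?g ?P \<le> t" unfolding t decomp[OF u] using zu xu by simp
    qed
  next
    show "\<forall>\<epsilon>>0. \<exists>t\<in>{C (S u) x z |x z. feas (S u) x z \<and> x u = \<alpha>}. t < ?K + sum ?g ?P + \<epsilon>"
    proof (intro allI impI)
      fix \<epsilon> :: real assume ep: "\<epsilon> > 0"
      define \<delta> where "\<delta> = \<epsilon> / (card ?P + 1)"
      have dpos: "\<delta> > 0" using ep unfolding \<delta>_def by simp
      have "\<forall>v\<in>?P. \<exists>p. feas (S v) (fst p) (snd p)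
            \<and> Q u v * \<alpha> * fst p v + C (S v) (fst p) (snd p) < ?g v + \<delta>"
      proof
        fix v assume v: "v \<in> ?P"
        have "Inf (Tv v (Q u v * \<alpha>)) < ?g v + \<delta>" using dpos by simp
        then obtain t where "t \<in> Tv v (Q u v * \<alpha>)" "t < ?g v + \<delta>" using cInf_lessD[OF Tv_ne] by blast
        then obtain x z where "feas (S v) x z" "Q u v * \<alpha> * x v + C (S v) x z < ?g v + \<delta>"
          unfolding Tv_def by blast
        then show "\<exists>p. feas (S v) (fst p) (snd p)
            \<and> Q u v * \<alpha> * fst p v + C (S v) (fst p) (snd p) < ?g v + \<delta>"
          by (intro exI[of _ "(x, z)"]) simp
      qed
      then obtain pp where pp: "\<And>v. v \<in> ?P \<Longrightarrow> feas (S v) (fst (pp v)) (snd (pp v))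
            \<and> Q u v * \<alpha> * fst (pp v) v + C (S v) (fst (pp v)) (snd (pp v)) < ?g v + \<delta>"
        using bchoice by metis
      define own where "own i = (SOME v. v \<in> ?P \<and> i \<in> S v)" for i
      have own: "own i = v" if "v \<in> ?P" "i \<in> S v" for i v
        unfolding own_def
      proof (rule some_equality)
        show "v \<in> ?P \<and> i \<in> S v" using that by simp
        fix w assume "w \<in> ?P \<and> i \<in> S w"
        then show "w = v" using supp_disj[of w u v] that by blast
      qed
      define x where "x i = (if i = u then \<alpha> else fst (pp (own i)) i)" for i
      define z where "z i = (if i = u then indic \<alpha> else snd (pp (own i)) i)" for i
      have agree: "\<forall>i\<in>S v. x i = fst (pp v) i \<and> z i = snd (pp v) i" if v: "v \<in> ?P" for v
        using own[OF v] u_notin[OF v] unfolding x_def z_def by auto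
      have fe: "feas (S u) x z" unfolding feas_def
      proof
        fix i assume i: "i \<in> S u"
        show "z i \<in> {0, 1} \<and> x i * (1 - z i) = 0"
        proof (cases "i = u")
          case True then show ?thesis unfolding x_def z_def indic_def by simp
        next
          case False
          then obtain v where v: "v \<in> ?P" "i \<in> S v" using i supp_split[OF u] by blast
          then show ?thesis using agree[OF v(1)] pp[OF v(1)] unfolding feas_def by auto
        qed
      qed
      have xu: "x u = \<alpha>" "z u = indic \<alpha>" unfolding x_def z_def by simp_all
      have terms: "Q u v * x u * x v + C (S v) x z < ?g v + \<delta>" if v: "v \<in> ?P" for v
      proof -
        have "x v = fst (pp v) v" using agree[OF v] supp_self[OF par_props(1)[OF v]] by blast
        moreover have "C (S v) x z = C (S v) (fst (pp v)) (snd (pp v))"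
          using agree[OF v] by (rule cst_cong)
        ultimately show ?thesis using pp[OF v] xu by simp
      qed
      have "(\<Sum>v\<in>?P. Q u v * x u * x v + C (S v) x z) \<le> (\<Sum>v\<in>?P. ?g v + \<delta>)"
        using terms by (intro sum_mono) (simp add: less_imp_le)
      also have "\<dots> = sum ?g ?P + card ?P * \<delta>" by (simp add: sum.distrib)
      finally have s: "(\<Sum>v\<in>?P. Q u v * x u * x v + C (S v) x z) \<le> sum ?g ?P + card ?P * \<delta>" .
      have "card ?P * \<delta> < \<epsilon>"
      proof -
        have "card ?P * \<delta> = \<epsilon> * (card ?P / (card ?P + 1))" unfolding \<delta>_def by simp
        also have "\<dots> < \<epsilon> * 1" using ep by (intro mult_strict_left_mono) auto
        finally show ?thesis by simp
      qed
      then have "C (S u) x z < ?K + sum ?g ?P + \<epsilon>" unfolding decomp[OF u] using s xu by simp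
      then show "\<exists>t\<in>{C (S u) x z |x z. feas (S u) x z \<and> x u = \<alpha>}. t < ?K + sum ?g ?P + \<epsilon>"
        using fe xu by blast
    qed
  qed
qed

end

theorem mainTheorem3:
  fixes Q :: "nat \<Rightarrow> nat \<Rightarrow> real" and c lam :: "nat \<Rightarrow> real" and n :: nat
  assumes sym: "\<forall>i\<in>nodes n. \<forall>j\<in>nodes n. Q i j = Q j i"
    and posdef: "\<forall>x :: nat \<Rightarrow> real. (\<exists>i\<in>nodes n. x i \<noteq> 0) \<longrightarrow>
                   (\<Sum>i\<in>nodes n. \<Sum>j\<in>nodes n. x i * Q i j * x j) > 0"
    and diag: "\<forall>i\<in>nodes n. Q i i = 1"
    and tree: "support_is_tree Q n"
    and topo: "topological_labeling Q n"
    and lam_pos: "\<forall>i\<in>nodes n. lam i > 0"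
  shows "\<forall>u\<in>nodes n. \<forall>\<alpha>::real.
           fcost Q c lam n u \<alpha> =
             (1/2) * Q u u * \<alpha>^2 + c u * \<alpha> + lam u * indic \<alpha>
             - (\<Sum>v\<in>par Q n u. fconj Q c lam n v (- Q u v * \<alpha>))"
  proof (intro ballI allI)
  fix u \<alpha> assume u: "u \<in> nodes n"
  then have npos: "1 \<le> n" by (simp add: nodes_def)
  interpret msetup Q n c lam
    by unfold_locales (fact sym tree topo npos posdef lam_pos)+
  have "(\<Sum>v\<in>par Q n u. fconj Q c lam n v (- Q u v * \<alpha>))
      = (\<Sum>v\<in>par Q n u. - Inf (Tv v (Q u v * \<alpha>)))"
    using conj_eq[OF par_props(1)] by (intro sum.cong refl) simp
  also have "\<dots> = - (\<Sum>v\<in>par Q n u. Inf (Tv v (Q u v * \<alpha>)))" by (simp add: sum_negf)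
  finally show "fcost Q c lam n u \<alpha> =
             (1/2) * Q u u * \<alpha>^2 + c u * \<alpha> + lam u * indic \<alpha>
             - (\<Sum>v\<in>par Q n u. fconj Q c lam n v (- Q u v * \<alpha>))"
    using recur[OF u] by simp
qed

end
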